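(* For the sequence $\{\bm g^t=(\bm\beta^t,\bm z^t,\bm u^t)\}$ generated by the parallel PPA or the improved parallel PPA, $$\|\bm g^{t+1}-\bm g^*\|_{\bm H_*}^2\le\|\bm g^t-\bm g^*\|_{\bm H_*}^2-\|\bm g^{t+1}-\bm g^t\|_{\bm H_*}^2,\quad\forall\,\bm g^*\in\Omega^*,$$ where $\bm H_*=\bm H$ for the parallel PPA and $\bm H_*=\bm H_K$ for the improved parallel PPA.
   Context: Dantzig selector in split form: with $\bm X=(\bm X_1,\dots,\bm X_K)\in\mathbb R^{n\times p}$, $\bm y\in\mathbb R^n$, $\bm A=\bm X^\top\bm X=(\bm A_1,\dots,\bm A_K)$, $\bm A_i=\bm X^\top\bm X_i\in\mathbb R^{p\times p_i}$, $\bm\beta=(\bm\beta_{1\cdot}^\top,\dots,\bm\beta_{K\cdot}^\top)^\top$, solve $\min_{\bm\beta,\bm z}\sum_i\|\bm\beta_{i\cdot}\|_1+\delta(\bm z)$ s.t. $\sum_i\bm A_i\bm\beta_{i\cdot}-\bm z=\bm X^\top\bm y$, where $\delta$ is the indicator of $\{\bm z:\|\bm z\|_\infty\le n\lambda\}$. Lagrangian $L(\bm\beta,\bm z;\bm u)=\sum_i\|\bm\beta_{i\cdot}\|_1+\delta(\bm z)-\bm u^\top(\sum_i\bm A_i\bm\beta_{i\cdot}-\bm z-\bm X^\top\bm y)$; $\Omega^*$ is its (assumed non-empty) set of saddle points. Parallel PPA with $\mu>0$ and $\eta$ larger than the largest eigenvalue of $\mu\bm A^\top\bm A$: $\bm\beta_{i\cdot}^{t+1}=\mathrm{sign}(\bm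 v_i)\odot\max\{|\bm v_i|-1/\eta,0\}$ with $\bm v_i=\bm\beta_{i\cdot}^t+\bm A_i^\top\bm u^t/\eta$; $\bm z^{t+1}=\min\{\max\{\bm z^t-\bm u^t/\mu,-n\lambda\},n\lambda\}$; $\bm u^{t+1}=\bm u^t-\frac{\mu}{2}[2(\bm A\bm\beta^{t+1}-\bm z^{t+1}-\bm X^\top\bm y)-(\bm A\bm\beta^t-\bm z^t-\bm X^\top\bm y)]$. Improved parallel PPA: same but $\eta$ replaced by $\eta_i$ (larger than the largest eigenvalue of $\mu\bm A_i^\top\bm A_i$) in block $i$, and $\frac{\mu}{2}$ replaced by $\frac{\mu}{K+1}$ in the $\bm u$ update. $\|\bm v\|_{\bm H}=\sqrt{\bm v^\top\bm H\bm v}$, with $\bm H=\begin{pmatrix}\eta\bm I_p&\bm 0&\bm A^\top\\\bm 0&\mu\bm I_p&-\bm I_p\\\bm A&-\bm I_p&\frac{2}{\mu}\bm I_p\end{pmatrix}$ and $\bm H_K=\begin{pmatrix}\mathrm{diag}(\eta_1\bm I_{p_1},\dots,\eta_K\bm I_{p_K},\mu\bm I_p)&\bm G^\top\\\bm G&\frac{K+1}{\mu}\bm I_p\end{pmatrix}$, $\bm G=(\bm A_1,\dots,\bm A_K,-\bm I_p)$; both positive definite. *)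

theory Defs
  imports "HOL-Analysis.Analysis"
begin

text \<open>Data: X is an n x p matrix (rows indexed by 'n, columns by 'p), y in R^n.
  A = X^T X.  The columns are split into K blocks by blk :: 'p => nat.\<close>

definition gram :: "real^'p^'n \<Rightarrow> real^'p^'p" where
  "gram X = transpose X ** X"

definition in_box :: "nat \<Rightarrow> real \<Rightarrow> real^'p \<Rightarrow> bool" where
  "in_box n lam z \<longleftrightarrow> (\<forall>j. \<bar>z$j\<bar> \<le> real n * lam)"

definition box_ind :: "nat \<Rightarrow> real \<Rightarrow> real^'p \<Rightarrow> ereal" where
  "box_ind n lam z = (if in_box n lam z then 0 else \<infinity>)"

definition lagr :: "real^'p^'n \<Rightarrow> real^'n \<Rightarrow> real \<Rightarrow> real^'p \<Rightarrow> real^'p \<Rightarrow> real^'p \<Rightarrow> ereal" where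
  "lagr X y lam \<beta> z u =
     ereal ((\<Sum>j\<in>UNIV. \<bar>\<beta>$j\<bar>) - u \<bullet> (gram X *v \<beta> - z - transpose X *v y))
     + box_ind CARD('n) lam z"

definition saddle_set :: "real^'p^'n \<Rightarrow> real^'n \<Rightarrow> real \<Rightarrow> ((real^'p) \<times> (real^'p) \<times> (real^'p)) set" where
  "saddle_set X y lam = {(\<beta>s, zs, us). \<forall>\<beta> z u.
      lagr X y lam \<beta>s zs u \<le> lagr X y lam \<beta>s zs us \<and>
      lagr X y lam \<beta>s zs us \<le> lagr X y lam \<beta> z us}"

text \<open>c is an eigenvalue of the principal submatrix M[I,I] (for I = UNIV: of M itself).\<close>
definition eigenvalue_on :: "'p set \<Rightarrow> real^'p^'p \<Rightarrow> real \<Rightarrow> bool" where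
  "eigenvalue_on I M c \<longleftrightarrow> (\<exists>v::real^'p. v \<noteq> 0 \<and> (\<forall>j. j \<notin> I \<longrightarrow> v$j = 0) \<and>
      (\<forall>j\<in>I. (\<Sum>k\<in>I. M$j$k * v$k) = c * v$j))"

text \<open>One generic iteration scheme: per-coordinate proximal parameter eta j,
  and dual step coefficient cu (mu/2 for parallel PPA, mu/(K+1) for improved).\<close>
definition ppa_seq :: "real^'p^'n \<Rightarrow> real^'n \<Rightarrow> real \<Rightarrow> real \<Rightarrow> ('p \<Rightarrow> real) \<Rightarrow> real
     \<Rightarrow> (nat \<Rightarrow> real^'p) \<Rightarrow> (nat \<Rightarrow> real^'p) \<Rightarrow> (nat \<Rightarrow> real^'p) \<Rightarrow> bool" where
  "ppa_seq X y lam \<mu> eta cu \<beta> z u \<longleftrightarrow> (\<forall>t.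
     (\<forall>j. let v = \<beta> t $ j + (transpose (gram X) *v u t) $ j / eta j in
          \<beta> (Suc t) $ j = sgn v * max (\<bar>v\<bar> - 1 / eta j) 0) \<and>
     (\<forall>j. z (Suc t) $ j = min (max (z t $ j - u t $ j / \<mu>) (- (real CARD('n) * lam)))
                             (real CARD('n) * lam)) \<and>
     u (Suc t) = u t - cu *\<^sub>R
        (2 *\<^sub>R (gram X *v \<beta> (Suc t) - z (Suc t) - transpose X *v y)
           - (gram X *v \<beta> t - z t - transpose X *v y)))"

text \<open>Squared H-norm ||(beta,z,u)||_H^2 = v^T H v for
  H = [[diag(eta), 0, A^T], [0, mu I, -I], [A, -I, d I]]  (so G = (A, -I)).
  H: eta constant, d = 2/mu.  H_K: eta blockwise eta_i, d = (K+1)/mu.\<close>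
definition Hnorm_sq :: "real^'p^'n \<Rightarrow> ('p \<Rightarrow> real) \<Rightarrow> real \<Rightarrow> real
     \<Rightarrow> (real^'p) \<times> (real^'p) \<times> (real^'p) \<Rightarrow> real" where
  "Hnorm_sq X eta \<mu> d g = (case g of (\<beta>, z, u) \<Rightarrow>
      (\<Sum>j\<in>UNIV. eta j * (\<beta>$j)\<^sup>2) + \<mu> * (z \<bullet> z)
      + 2 * (u \<bullet> (gram X *v \<beta> - z)) + d * (u \<bullet> u))"

end

theory Submission
  imports Defs
begin


lemma tdot: "(transpose (A::real^'a^'b) *v w) \<bullet> v = w \<bullet> (A *v v)"
  by (metis dot_lmul_matrix vector_transpose_matrix transpose_transpose)

lemma saddle_facts:
  fixes X :: "real^'p::finite^'n::finite"
  assumes gs: "(bs,zs,us) \<in> saddle_set X y lam" and lam: "lam \<ge> 0"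
  shows "in_box CARD('n) lam zs"
    and "gram X *v bs - zs - transpose X *v y = 0"
    and "\<forall>j x. \<bar>bs$j\<bar> + (transpose (gram X) *v us)$j * (x - bs$j) \<le> \<bar>x\<bar>"
    and "\<forall>z::real^'p. in_box CARD('n) lam z \<longrightarrow> us \<bullet> zs \<le> us \<bullet> z"
proof -
  have S1: "\<And>u. lagr X y lam bs zs u \<le> lagr X y lam bs zs us"
   and S2: "\<And>b z. lagr X y lam bs zs us \<le> lagr X y lam b z us"
    using gs unfolding saddle_set_def by auto
  have box0: "in_box CARD('n) lam 0" using lam by (simp add: in_box_def)
  show box: "in_box CARD('n) lam zs"
  proof (rule ccontr)
    assume "\<not> ?thesis"
    hence "lagr X y lam bs zs us = \<infinity>" by (simp add: lagr_def box_ind_def)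
    moreover have "lagr X y lam bs 0 us \<noteq> \<infinity>" using box0 by (simp add: lagr_def box_ind_def)
    ultimately show False using S2[of bs 0] by simp
  qed
  let ?b = "transpose X *v y"
  let ?r = "gram X *v bs - zs - ?b"
  have L: "\<And>b z u. in_box CARD('n) lam z \<Longrightarrow> lagr X y lam b z u = ereal ((\<Sum>j\<in>UNIV. \<bar>b$j\<bar>) - u \<bullet> (gram X *v b - z - ?b))"
    by (simp add: lagr_def box_ind_def)
  have "- ((us - ?r) \<bullet> ?r) \<le> - (us \<bullet> ?r)" using S1[of "us - ?r"] L[OF box] by simp
  hence "?r \<bullet> ?r \<le> 0" by (simp add: inner_diff_left)
  thus "?r = 0" using inner_ge_zero[of ?r] by (metis inner_eq_zero_iff order_antisym)
  show "\<forall>j x. \<bar>bs$j\<bar> + (transpose (gram X) *v us)$j * (x - bs$j) \<le> \<bar>x\<bar>"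
  proof (intro allI)
    fix j x
    define b' where "b' = bs + axis j (x - bs$j)"
    have "(\<Sum>k\<in>UNIV. \<bar>bs$k\<bar>) - us \<bullet> (gram X *v bs - zs - ?b) \<le> (\<Sum>k\<in>UNIV. \<bar>b'$k\<bar>) - us \<bullet> (gram X *v b' - zs - ?b)"
      using S2[of b' zs] L[OF box] by simp
    moreover have "(\<Sum>k\<in>UNIV. \<bar>b'$k\<bar>) = (\<Sum>k\<in>UNIV. \<bar>bs$k\<bar>) + (\<bar>x\<bar> - \<bar>bs$j\<bar>)"
    proof -
      have "(\<Sum>k\<in>UNIV. \<bar>b'$k\<bar>) = (\<Sum>k\<in>UNIV. \<bar>bs$k\<bar> + (if k = j then \<bar>x\<bar> - \<bar>bs$j\<bar> else 0))"
        by (rule sum.cong) (auto simp: b'_def axis_def)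
      thus ?thesis by (simp add: sum.distrib)
    qed
    moreover have "us \<bullet> (gram X *v b' - zs - ?b) = us \<bullet> (gram X *v bs - zs - ?b) + (transpose (gram X) *v us)$j * (x - bs$j)"
    proof -
      have "us \<bullet> (gram X *v b' - zs - ?b) = us \<bullet> (gram X *v bs - zs - ?b) + us \<bullet> (gram X *v axis j (x - bs$j))"
        by (simp add: b'_def matrix_vector_right_distrib inner_add_right inner_diff_right)
      also have "us \<bullet> (gram X *v axis j (x - bs$j)) = (transpose (gram X) *v us) \<bullet> axis j (x - bs$j)"
        by (rule tdot[symmetric])
      finally show ?thesis by (simp add: inner_axis)
    qed
    ultimately show "\<bar>bs$j\<bar> + (transpose (gram X) *v us)$j * (x - bs$j) \<le> \<bar>x\<bar>" by linarith
  qed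
  show "\<forall>z::real^'p. in_box CARD('n) lam z \<longrightarrow> us \<bullet> zs \<le> us \<bullet> z"
  proof (intro allI impI)
    fix z :: "real^'p" assume "in_box CARD('n) lam z"
    thus "us \<bullet> zs \<le> us \<bullet> z" using S2[of bs z] L[OF box] L[of z]
      by (simp add: inner_diff_right)
  qed
qed



lemma Hexp:
  "Hnorm_sq X eta \<mu> d ((b,z,u) + (b',z',u')) = Hnorm_sq X eta \<mu> d (b,z,u) + Hnorm_sq X eta \<mu> d (b',z',u')
     + 2 * ((\<Sum>j\<in>UNIV. eta j * b$j * b'$j) + \<mu> * (z \<bullet> z') + u \<bullet> (gram X *v b' - z')
            + u' \<bullet> (gram X *v b - z) + d * (u \<bullet> u'))"
proof -
  have s: "(\<Sum>j\<in>UNIV. eta j * ((b+b')$j)\<^sup>2) = (\<Sum>j\<in>UNIV. eta j * (b$j)\<^sup>2) + (\<Sum>j\<in>UNIV. eta j * (b'$j)\<^sup>2) + 2 * (\<Sum>j\<in>UNIV. eta j * b$j * b'$j)"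
    by (simp add: sum.distrib sum_distrib_left power2_sum algebra_simps)
  show ?thesis
    unfolding Hnorm_sq_def using s
    by (simp add: matrix_vector_right_distrib inner_add_left inner_add_right inner_diff_left inner_diff_right inner_commute algebra_simps)
qed

lemma Hneg: "Hnorm_sq X eta \<mu> d (-b,-z,-u) = Hnorm_sq X eta \<mu> d (b,z,u)"
proof -
  have "gram X *v (-b) = - (gram X *v b)"
    by (simp add: vec_eq_iff matrix_vector_mult_def sum_negf)
  thus ?thesis unfolding Hnorm_sq_def by (simp add: inner_diff_right)
qed

lemma soft_sub:
  fixes e v x b :: real
  assumes "e > 0" and "b = sgn v * max (\<bar>v\<bar> - 1/e) 0"
  shows "\<bar>b\<bar> + e * (v - b) * (x - b) \<le> \<bar>x\<bar>"
proof (cases "\<bar>v\<bar> \<le> 1/e")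
  case True
  hence b: "b = 0" using assms(2) by simp
  have "\<bar>e * v\<bar> \<le> 1" using True assms(1) by (simp add: abs_mult field_simps)
  hence "e * v * x \<le> \<bar>x\<bar>"
    by (metis abs_ge_self abs_mult mult_left_le_one_le abs_ge_zero order_trans mult.commute mult_right_le_one_le)
  thus ?thesis using b by simp
next
  case False
  show ?thesis
  proof (cases "v > 0")
    case True
    hence "b = v - 1/e" using False assms(2) by auto
    moreover have "v - 1/e > 0" using False True by auto
    ultimately have "e * (v - b) = 1" "b > 0" using assms(1) by auto
    thus ?thesis by simp
  next
    case F2: False
    hence "b = v + 1/e" using False assms by (auto simp: sgn_if)
    moreover have "v + 1/e < 0" using False F2 by auto
    ultimately have "e * (v - b) = -1" "b < 0" using assms(1) by auto
    thus ?thesis by simp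
  qed
qed



lemma core:
  fixes X :: "real^'p::finite^'n::finite" and y :: "real^'n" and lam \<mu> cu d :: real
    and eta :: "'p \<Rightarrow> real"
  assumes mu: "\<mu> > 0" and eta: "\<forall>j. eta j > 0" and dc: "d * cu = 1" and lam: "lam > 0"
    and B1: "\<forall>j. let v = b0 $ j + (transpose (gram X) *v u0) $ j / eta j in
          b1 $ j = sgn v * max (\<bar>v\<bar> - 1 / eta j) 0"
    and Z1: "\<forall>j. z1 $ j = min (max (z0 $ j - u0 $ j / \<mu>) (- (real CARD('n) * lam)))
                             (real CARD('n) * lam)"
    and U1: "u1 = u0 - cu *\<^sub>R
        (2 *\<^sub>R (gram X *v b1 - z1 - transpose X *v y)
           - (gram X *v b0 - z0 - transpose X *v y))"
    and gs: "(bs, zs, us) \<in> saddle_set X y lam"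
  shows "Hnorm_sq X eta \<mu> d ((b1, z1, u1) - (bs, zs, us))
          \<le> Hnorm_sq X eta \<mu> d ((b0, z0, u0) - (bs, zs, us))
            - Hnorm_sq X eta \<mu> d ((b1, z1, u1) - (b0, z0, u0))"
proof -
  let ?A = "gram X" and ?At = "transpose (gram X)" and ?bb = "transpose X *v y"
  let ?R = "real CARD('n) * lam"
  have box: "in_box CARD('n) lam zs"
    and rs: "?A *v bs - zs - ?bb = 0"
    and subs: "\<forall>j x. \<bar>bs$j\<bar> + (?At *v us)$j * (x - bs$j) \<le> \<bar>x\<bar>"
    and sz: "\<forall>z::real^'p. in_box CARD('n) lam z \<longrightarrow> us \<bullet> zs \<le> us \<bullet> z"
    using saddle_facts[OF gs] lam by auto
  define ab where "ab = b1 - bs"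
  define az where "az = z1 - zs"
  define au where "au = u1 - us"
  define eb where "eb = b0 - b1"
  define ez where "ez = z0 - z1"
  define eu where "eu = u0 - u1"
  have split: "(b0, z0, u0) - (bs, zs, us) = (ab, az, au) + (eb, ez, eu)"
    by (simp add: ab_def az_def au_def eb_def ez_def eu_def)
  have diff: "(b1, z1, u1) - (b0, z0, u0) = (-eb, -ez, -eu)"
    by (simp add: eb_def ez_def eu_def)
  have a_eq: "(b1, z1, u1) - (bs, zs, us) = (ab, az, au)"
    by (simp add: ab_def az_def au_def)
  define B where "B = (\<Sum>j\<in>UNIV. eta j * ab$j * eb$j) + \<mu> * (az \<bullet> ez) + au \<bullet> (?A *v eb - ez)
            + eu \<bullet> (?A *v ab - az) + d * (au \<bullet> eu)"
  have "Hnorm_sq X eta \<mu> d ((b0, z0, u0) - (bs, zs, us)) =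
        Hnorm_sq X eta \<mu> d (ab, az, au) + Hnorm_sq X eta \<mu> d (eb, ez, eu) + 2 * B"
    unfolding split Hexp B_def by simp
  moreover have "Hnorm_sq X eta \<mu> d ((b1, z1, u1) - (b0, z0, u0)) = Hnorm_sq X eta \<mu> d (eb, ez, eu)"
    unfolding diff Hneg ..
  moreover have "B \<ge> 0"
  proof -
    define s where "s = (\<chi> j. eta j * eb$j + (?At *v u0)$j)"
    have sub1: "\<forall>j x. \<bar>b1$j\<bar> + s$j * (x - b1$j) \<le> \<bar>x\<bar>"
    proof (intro allI)
      fix j x
      define v where "v = b0 $ j + (?At *v u0) $ j / eta j"
      have bj: "b1 $ j = sgn v * max (\<bar>v\<bar> - 1 / eta j) 0" using B1 by (simp add: v_def Let_def)
      have "eta j * (v - b1$j) = s$j" using eta[rule_format, of j]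
        by (simp add: s_def v_def eb_def field_simps)
      thus "\<bar>b1$j\<bar> + s$j * (x - b1$j) \<le> \<bar>x\<bar>"
        using soft_sub[OF eta[rule_format, of j] bj, of x] by simp
    qed
    have T1: "0 \<le> (\<Sum>j\<in>UNIV. (s$j - (?At *v us)$j) * ab$j)"
    proof (rule sum_nonneg)
      fix j
      have "\<bar>b1$j\<bar> + s$j * (bs$j - b1$j) \<le> \<bar>bs$j\<bar>" using sub1 by blast
      moreover have "\<bar>bs$j\<bar> + (?At *v us)$j * (b1$j - bs$j) \<le> \<bar>b1$j\<bar>" using subs by blast
      ultimately show "0 \<le> (s$j - (?At *v us)$j) * ab$j" by (simp add: ab_def algebra_simps)
    qed
    have T1eq: "(\<Sum>j\<in>UNIV. (s$j - (?At *v us)$j) * ab$j) =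
        (\<Sum>j\<in>UNIV. eta j * ab$j * eb$j) + (au + eu) \<bullet> (?A *v ab)"
    proof -
      have "(\<Sum>j\<in>UNIV. (s$j - (?At *v us)$j) * ab$j) =
          (\<Sum>j\<in>UNIV. eta j * ab$j * eb$j) + (\<Sum>j\<in>UNIV. (?At *v (u0 - us))$j * ab$j)"
        by (simp add: s_def sum.distrib[symmetric] matrix_vector_mult_diff_distrib algebra_simps)
      also have "(\<Sum>j\<in>UNIV. (?At *v (u0 - us))$j * ab$j) = (?At *v (u0 - us)) \<bullet> ab"
        by (simp add: inner_vec_def)
      also have "\<dots> = (u0 - us) \<bullet> (?A *v ab)" by (rule tdot)
      also have "u0 - us = au + eu" by (simp add: au_def eu_def)
      finally show ?thesis .
    qed
    have Rnn: "?R \<ge> 0" using lam by simp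
    have z1box: "in_box CARD('n) lam z1" using Z1 Rnn unfolding in_box_def by (auto simp: abs_le_iff min_def max_def)
    have zj: "\<forall>j. 0 \<le> (\<mu> * ez$j - u0$j) * az$j"
    proof
      fix j
      have zsj: "\<bar>zs$j\<bar> \<le> ?R" using box by (simp add: in_box_def)
      have "(z0$j - u0$j/\<mu> - z1$j) * (zs$j - z1$j) \<le> 0"
        using Z1[rule_format, of j] zsj by (auto simp: abs_le_iff min_def max_def mult_le_0_iff)
      hence "\<mu> * ((z0$j - u0$j/\<mu> - z1$j) * (zs$j - z1$j)) \<le> 0" using mu
        by (simp add: mult_nonneg_nonpos)
      moreover have "\<mu> * ((z0$j - u0$j/\<mu> - z1$j) * (zs$j - z1$j)) = - ((\<mu> * ez$j - u0$j) * az$j)"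
        using mu by (simp add: ez_def az_def field_simps)
      ultimately show "0 \<le> (\<mu> * ez$j - u0$j) * az$j" by linarith
    qed
    have T2a: "0 \<le> (\<Sum>j\<in>UNIV. (\<mu> * ez$j - u0$j) * az$j)" using zj by (simp add: sum_nonneg)
    have T2aeq: "(\<Sum>j\<in>UNIV. (\<mu> * ez$j - u0$j) * az$j) = \<mu> * (az \<bullet> ez) - u0 \<bullet> az"
      by (simp add: inner_vec_def sum_subtractf sum_distrib_left algebra_simps)
    have T2b: "0 \<le> us \<bullet> az" using sz z1box by (simp add: az_def inner_diff_right)
    have V: "?A *v eb - ez + d *\<^sub>R eu - (?A *v ab - az) = 0"
    proof -
      have "eu = cu *\<^sub>R (2 *\<^sub>R (?A *v b1 - z1 - ?bb) - (?A *v b0 - z0 - ?bb))"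
        using U1 by (simp add: eu_def)
      hence "d *\<^sub>R eu = 2 *\<^sub>R (?A *v b1 - z1 - ?bb) - (?A *v b0 - z0 - ?bb)"
        using dc by simp
      moreover have "?A *v ab - az = ?A *v b1 - z1 - ?bb"
        using rs by (simp add: ab_def az_def matrix_vector_mult_diff_distrib algebra_simps)
      moreover have "?A *v eb - ez = (?A *v b0 - z0) - (?A *v b1 - z1)"
        by (simp add: eb_def ez_def matrix_vector_mult_diff_distrib algebra_simps)
      ultimately have "?A *v eb - ez + d *\<^sub>R eu - (?A *v ab - az) = ((?A *v b0 - z0) - (?A *v b1 - z1))
          + (2 *\<^sub>R (?A *v b1 - z1 - ?bb) - (?A *v b0 - z0 - ?bb)) - (?A *v b1 - z1 - ?bb)"
        by (simp only:)
      also have "\<dots> = 0" by (simp add: vec_eq_iff)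
      finally show ?thesis .
    qed
    have "B = (\<Sum>j\<in>UNIV. (s$j - (?At *v us)$j) * ab$j) + ((\<Sum>j\<in>UNIV. (\<mu> * ez$j - u0$j) * az$j) + us \<bullet> az)
              + au \<bullet> (?A *v eb - ez + d *\<^sub>R eu - (?A *v ab - az))"
      unfolding T1eq T2aeq B_def
      by (simp add: au_def eu_def inner_add_left inner_add_right inner_diff_left inner_diff_right algebra_simps)
    thus ?thesis using T1 T2a T2b V by simp
  qed
  ultimately show ?thesis unfolding a_eq by linarith
qed



lemma quad_zero:
  fixes a b :: real
  assumes "\<forall>t. 2*t*a + t^2*b \<le> 0"
  shows "a = 0"
proof -
  define t where "t = a / (\<bar>b\<bar> + 1)"
  have pos: "\<bar>b\<bar> + 1 > 0" by simp
  have ct: "(\<bar>b\<bar> + 1) * t = a" using pos unfolding t_def by simp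
  have "(\<bar>b\<bar> + 1)^2 * (2*t*a + t^2*b) = 2*((\<bar>b\<bar> + 1) * t)*a*(\<bar>b\<bar> + 1) + ((\<bar>b\<bar> + 1) * t)^2*b"
    by (simp add: power2_eq_square algebra_simps)
  also have "\<dots> = a^2 * (2*(\<bar>b\<bar>+1) + b)" unfolding ct by (simp add: power2_eq_square algebra_simps)
  finally have eq: "(\<bar>b\<bar> + 1)^2 * (2*t*a + t^2*b) = a^2 * (2*(\<bar>b\<bar>+1) + b)" .
  have "2*t*a + t^2*b \<le> 0" using assms by blast
  hence "(\<bar>b\<bar> + 1)^2 * (2*t*a + t^2*b) \<le> 0" by (simp add: mult_nonneg_nonpos)
  hence "a^2 * (2*(\<bar>b\<bar>+1) + b) \<le> 0" using eq by simp
  moreover have "2*(\<bar>b\<bar>+1) + b > 0" by (simp add: abs_if)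
  ultimately have "a^2 \<le> 0" by (simp add: mult_le_0_iff)
  thus ?thesis by simp
qed

lemma eig_exists:
  fixes M :: "real^'p::finite^'p" and I :: "'p set"
  assumes sym: "transpose M = M" and psd: "\<forall>x. 0 \<le> x \<bullet> (M *v x)" and ne: "I \<noteq> {}"
  shows "\<exists>c\<ge>0. eigenvalue_on I M c"
proof -
  define S where "S = {x::real^'p. \<forall>j. j \<notin> I \<longrightarrow> x$j = 0}"
  define Mr where "Mr = (\<chi> i k. if i \<in> I \<and> k \<in> I then M$i$k else 0)"
  define q where "q = (\<lambda>x. x \<bullet> (Mr *v x))"
  have Mr_app: "(Mr *v x)$j = (if j \<in> I then (\<Sum>k\<in>I. M$j$k * x$k) else 0)" for x j
  proof (cases "j \<in> I")
    case True
    have "(Mr *v x)$j = (\<Sum>k\<in>UNIV. if k \<in> I then M$j$k * x$k else 0)"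
      using True by (auto simp: Mr_def matrix_vector_mult_def intro!: sum.cong)
    also have "\<dots> = (\<Sum>k\<in>I. M$j$k * x$k)" by (simp add: sum.inter_restrict[where A=UNIV and B=I, symmetric])
    finally show ?thesis using True by simp
  qed (simp add: Mr_def matrix_vector_mult_def)
  have MrS: "\<And>x. Mr *v x \<in> S" by (simp add: S_def Mr_app)
  have Mr_M: "\<And>x j. x \<in> S \<Longrightarrow> j \<in> I \<Longrightarrow> (Mr *v x)$j = (M *v x)$j"
  proof -
    fix x j assume x: "x \<in> S" and j: "j \<in> I"
    have "(M *v x)$j = (\<Sum>k\<in>UNIV. if k \<in> I then M$j$k * x$k else 0)"
      using x by (auto simp: S_def matrix_vector_mult_def intro!: sum.cong)
    also have "\<dots> = (\<Sum>k\<in>I. M$j$k * x$k)" by (simp add: sum.inter_restrict[where A=UNIV and B=I, symmetric])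
    finally show "(Mr *v x)$j = (M *v x)$j" using j by (simp add: Mr_app)
  qed
  have qM: "\<And>x. x \<in> S \<Longrightarrow> q x = x \<bullet> (M *v x)"
  proof -
    fix x assume x: "x \<in> S"
    show "q x = x \<bullet> (M *v x)" unfolding q_def inner_vec_def
      by (rule sum.cong) (use x Mr_M in \<open>auto simp: S_def\<close>)
  qed
  have symr: "transpose Mr = Mr"
  proof -
    have "\<And>i k. M$k$i = M$i$k" using sym by (metis transpose_def vec_lambda_beta)
    thus ?thesis by (auto simp: Mr_def transpose_def vec_eq_iff)
  qed
  have symq: "\<And>v w. v \<bullet> (Mr *v w) = w \<bullet> (Mr *v v)"
    by (metis tdot symr inner_commute)
  have subS: "subspace S" by (auto simp: subspace_def S_def)
  hence clS: "closed S" by (rule closed_subspace)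
  define T where "T = sphere (0::real^'p) 1 \<inter> S"
  have cT: "compact T" unfolding T_def using clS by auto
  obtain j0 where "j0 \<in> I" using ne by auto
  hence "axis j0 (1::real) \<in> S" unfolding S_def by (auto simp: axis_def)
  hence "axis j0 (1::real) \<in> T" unfolding T_def using norm_axis_1[of j0] by simp
  hence neT: "T \<noteq> {}" by auto
  have cont: "continuous_on T q" unfolding q_def
    by (intro continuous_intros linear_continuous_on matrix_vector_mul_bounded_linear)
  obtain v where vT: "v \<in> T" and vmax: "\<forall>y\<in>T. q y \<le> q v"
    using continuous_attains_sup[OF cT neT cont] by blast
  define lam where "lam = q v"
  have vS: "v \<in> S" and vn: "norm v = 1" using vT by (auto simp: T_def)
  have vv: "v \<bullet> v = 1" using vn by (simp add: norm_eq_sqrt_inner)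
  have qscale: "\<And>c x. q (c *\<^sub>R x) = c^2 * q x"
    by (simp add: q_def matrix_vector_mult_scaleR power2_eq_square)
  have C1: "\<And>x. x \<in> S \<Longrightarrow> q x \<le> lam * (x \<bullet> x)"
  proof -
    fix x assume x: "x \<in> S"
    show "q x \<le> lam * (x \<bullet> x)"
    proof (cases "x = 0")
      case True thus ?thesis by (simp add: q_def)
    next
      case False
      define x' where "x' = (1 / norm x) *\<^sub>R x"
      have "x' \<in> T" using False x subspace_scale[OF subS x] by (simp add: T_def x'_def)
      hence "q x' \<le> lam" using vmax lam_def by auto
      moreover have "q x' = q x / (x \<bullet> x)"
        by (simp add: x'_def qscale power2_eq_square dot_square_norm power_divide)
      ultimately show ?thesis using False
        by (simp add: divide_le_eq)
    qed
  qed
  have C2: "\<And>w. w \<in> S \<Longrightarrow> w \<bullet> (Mr *v v) - lam * (w \<bullet> v) = 0"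
  proof -
    fix w assume w: "w \<in> S"
    have "\<forall>t. 2*t*(w \<bullet> (Mr *v v) - lam * (w \<bullet> v)) + t^2*(q w - lam * (w \<bullet> w)) \<le> 0"
    proof
      fix t
      have "v + t *\<^sub>R w \<in> S" using subS vS w by (simp add: subspace_add subspace_scale)
      hence ineq: "q (v + t *\<^sub>R w) \<le> lam * ((v + t *\<^sub>R w) \<bullet> (v + t *\<^sub>R w))" by (rule C1)
      have eq1: "q (v + t *\<^sub>R w) = lam + 2*t*(w \<bullet> (Mr *v v)) + t^2 * q w"
        using symq[of v w]
        by (simp add: q_def lam_def matrix_vector_right_distrib matrix_vector_mult_scaleR inner_add_left inner_add_right power2_eq_square algebra_simps)
      have eq2: "(v + t *\<^sub>R w) \<bullet> (v + t *\<^sub>R w) = 1 + 2*t*(w \<bullet> v) + t^2*(w \<bullet> w)"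
        using vv by (simp add: inner_add_left inner_add_right inner_commute power2_eq_square algebra_simps)
      have "lam + 2*t*(w \<bullet> (Mr *v v)) + t^2 * q w \<le> lam * (1 + 2*t*(w \<bullet> v) + t^2*(w \<bullet> w))"
        using ineq unfolding eq1 eq2 .
      thus "2*t*(w \<bullet> (Mr *v v) - lam * (w \<bullet> v)) + t^2*(q w - lam * (w \<bullet> w)) \<le> 0"
        by (simp add: algebra_simps)
    qed
    thus "w \<bullet> (Mr *v v) - lam * (w \<bullet> v) = 0" by (rule quad_zero)
  qed
  define w where "w = Mr *v v - lam *\<^sub>R v"
  have "w \<in> S" unfolding w_def using subS MrS vS by (simp add: subspace_diff subspace_scale)
  hence "w \<bullet> w = 0" using C2[of w] by (simp add: w_def inner_diff_right)
  hence eig: "Mr *v v = lam *\<^sub>R v" by (simp add: w_def)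
  have "eigenvalue_on I M lam"
    unfolding eigenvalue_on_def
  proof (intro exI[of _ v] conjI allI impI ballI)
    show "v \<noteq> 0" using vn by auto
    show "\<And>j. j \<notin> I \<Longrightarrow> v$j = 0" using vS by (simp add: S_def)
    fix j assume "j \<in> I"
    thus "(\<Sum>k\<in>I. M$j$k * v$k) = lam * v$j" using arg_cong[OF eig, of "\<lambda>x. x$j"] by (simp add: Mr_app)
  qed
  moreover have "lam \<ge> 0" using psd qM[OF vS] by (simp add: lam_def)
  ultimately show ?thesis by blast
qed


theorem proposition2:
  fixes X :: "real^'p::finite^'n::finite" and y :: "real^'n" and lam \<mu> :: real
    and K :: nat and blk :: "'p \<Rightarrow> nat"
  assumes lam_pos: "lam > 0" and mu_pos: "\<mu> > 0"
    and blk_range: "\<forall>j. blk j < K"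
    and blk_nonempty: "\<forall>i<K. \<exists>j. blk j = i"
  shows
   "(\<forall>(\<eta>::real) \<beta> z u.
       (\<forall>c. eigenvalue_on UNIV (\<mu> *\<^sub>R (transpose (gram X) ** gram X)) c \<longrightarrow> c < \<eta>) \<longrightarrow>
       ppa_seq X y lam \<mu> (\<lambda>j. \<eta>) (\<mu> / 2) \<beta> z u \<longrightarrow>
       (\<forall>gs \<in> saddle_set X y lam. \<forall>t.
          Hnorm_sq X (\<lambda>j. \<eta>) \<mu> (2 / \<mu>) ((\<beta> (Suc t), z (Suc t), u (Suc t)) - gs)
          \<le> Hnorm_sq X (\<lambda>j. \<eta>) \<mu> (2 / \<mu>) ((\<beta> t, z t, u t) - gs)
            - Hnorm_sq X (\<lambda>j. \<eta>) \<mu> (2 / \<mu>)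
                ((\<beta> (Suc t), z (Suc t), u (Suc t)) - (\<beta> t, z t, u t))))
    \<and>
    (\<forall>(\<eta>::nat \<Rightarrow> real) \<beta> z u.
       (\<forall>i<K. \<forall>c. eigenvalue_on {j. blk j = i} (\<mu> *\<^sub>R (transpose (gram X) ** gram X)) c
                    \<longrightarrow> c < \<eta> i) \<longrightarrow>
       ppa_seq X y lam \<mu> (\<lambda>j. \<eta> (blk j)) (\<mu> / (real K + 1)) \<beta> z u \<longrightarrow>
       (\<forall>gs \<in> saddle_set X y lam. \<forall>t.
          Hnorm_sq X (\<lambda>j. \<eta> (blk j)) \<mu> ((real K + 1) / \<mu>) ((\<beta> (Suc t), z (Suc t), u (Suc t)) - gs)
          \<le> Hnorm_sq X (\<lambda>j. \<eta> (blk j)) \<mu> ((real K + 1) / \<mu>) ((\<beta> t, z t, u t) - gs)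
            - Hnorm_sq X (\<lambda>j. \<eta> (blk j)) \<mu> ((real K + 1) / \<mu>)
                ((\<beta> (Suc t), z (Suc t), u (Suc t)) - (\<beta> t, z t, u t))))"
  proof -
  let ?M = "\<mu> *\<^sub>R (transpose (gram X) ** gram X)"
  have symM: "transpose ?M = ?M"
    unfolding transpose_scalar matrix_transpose_mul transpose_transpose ..
  have psdM: "\<forall>x. 0 \<le> x \<bullet> (?M *v x)"
  proof
    fix x :: "real^'p"
    have "?M *v x = \<mu> *\<^sub>R ((transpose (gram X) ** gram X) *v x)"
      by (rule scaleR_matrix_vector_assoc[symmetric])
    also have "(transpose (gram X) ** gram X) *v x = transpose (gram X) *v (gram X *v x)"
      by (rule matrix_vector_mul_assoc[symmetric])
    finally have e1: "?M *v x = \<mu> *\<^sub>R (transpose (gram X) *v (gram X *v x))" .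
    have e2: "x \<bullet> (transpose (gram X) *v (gram X *v x)) = (gram X *v x) \<bullet> (gram X *v x)"
      using tdot[of "gram X" "gram X *v x" x] by (simp only: inner_commute)
    have "x \<bullet> (?M *v x) = \<mu> * ((gram X *v x) \<bullet> (gram X *v x))"
      unfolding e1 inner_scaleR_right e2 ..
    thus "0 \<le> x \<bullet> (?M *v x)" using mu_pos by simp
  qed
  show ?thesis
  proof (intro conjI allI impI ballI)
    fix \<eta> :: real and \<beta> z u :: "nat \<Rightarrow> real^'p" and gs t
    assume H: "\<forall>c. eigenvalue_on UNIV ?M c \<longrightarrow> c < \<eta>"
      and P: "ppa_seq X y lam \<mu> (\<lambda>j. \<eta>) (\<mu> / 2) \<beta> z u"
      and G: "gs \<in> saddle_set X y lam"
    have ne: "UNIV \<noteq> ({} :: 'p set)" by simp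
    obtain c where c0: "c \<ge> 0" and ce: "eigenvalue_on UNIV ?M c" using eig_exists[OF symM psdM ne] by blast
    have "c < \<eta>" using H ce by blast
    hence etap: "\<eta> > 0" using c0 by linarith
    obtain bs zs us where gsd: "gs = (bs, zs, us)" by (cases gs) auto
    have dc: "2 / \<mu> * (\<mu> / 2) = 1" using mu_pos by simp
    show "Hnorm_sq X (\<lambda>j. \<eta>) \<mu> (2 / \<mu>) ((\<beta> (Suc t), z (Suc t), u (Suc t)) - gs)
          \<le> Hnorm_sq X (\<lambda>j. \<eta>) \<mu> (2 / \<mu>) ((\<beta> t, z t, u t) - gs)
            - Hnorm_sq X (\<lambda>j. \<eta>) \<mu> (2 / \<mu>)
                ((\<beta> (Suc t), z (Suc t), u (Suc t)) - (\<beta> t, z t, u t))"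
      using P[unfolded ppa_seq_def, rule_format, of t] G unfolding gsd
      by (intro core[OF mu_pos _ dc lam_pos]) (use etap in \<open>simp_all\<close>)
  next
    fix \<eta> :: "nat \<Rightarrow> real" and \<beta> z u :: "nat \<Rightarrow> real^'p" and gs t
    assume H: "\<forall>i<K. \<forall>c. eigenvalue_on {j. blk j = i} ?M c \<longrightarrow> c < \<eta> i"
      and P: "ppa_seq X y lam \<mu> (\<lambda>j. \<eta> (blk j)) (\<mu> / (real K + 1)) \<beta> z u"
      and G: "gs \<in> saddle_set X y lam"
    have etap: "\<forall>j. \<eta> (blk j) > 0"
    proof
      fix j
      have "j \<in> {j'. blk j' = blk j}" by simp
      hence ne: "{j'. blk j' = blk j} \<noteq> {}" by (rule ex_in_conv[THEN iffD1, OF exI])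
      obtain c where c0: "c \<ge> 0" and ce: "eigenvalue_on {j'. blk j' = blk j} ?M c"
        using eig_exists[OF symM psdM ne] by blast
      have "blk j < K" using blk_range by blast
      hence "c < \<eta> (blk j)" using H ce by blast
      thus "\<eta> (blk j) > 0" using c0 by linarith
    qed
    obtain bs zs us where gsd: "gs = (bs, zs, us)" by (cases gs) auto
    have dc: "(real K + 1) / \<mu> * (\<mu> / (real K + 1)) = 1" using mu_pos by simp
    show "Hnorm_sq X (\<lambda>j. \<eta> (blk j)) \<mu> ((real K + 1) / \<mu>) ((\<beta> (Suc t), z (Suc t), u (Suc t)) - gs)
          \<le> Hnorm_sq X (\<lambda>j. \<eta> (blk j)) \<mu> ((real K + 1) / \<mu>) ((\<beta> t, z t, u t) - gs)
            - Hnorm_sq X (\<lambda>j. \<eta> (blk j)) \<mu> ((real K + 1) / \<mu>)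
                ((\<beta> (Suc t), z (Suc t), u (Suc t)) - (\<beta> t, z t, u t))"
      using P[unfolded ppa_seq_def, rule_format, of t] G unfolding gsd
      by (intro core[OF mu_pos _ dc lam_pos]) (use etap in \<open>simp_all\<close>)
  qed
qed

end
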